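(* Let $M,N$ be weights of $\mathbb{R}^m,\mathbb{R}^n$, let $A\in\mathbb{R}^{m\times n}$ with $MA=AN$, and let $K\subseteq\mathbb{R}^n$ be a closed cone. Then $$A^{[\dagger]}\circ A\circ K\subseteq K\iff A^{[\dagger]}\circ A\circ K^{[*]}\subseteq K^{[*]}.$$
   Context: A weight is a real symmetric matrix $W$ with $W^2=I$. $\mathbb{R}^m$ and $\mathbb{R}^n$ carry weights $M\in\mathbb{R}^{m\times m}$ and $N\in\mathbb{R}^{n\times n}$, respectively. The indefinite inner product on the space with weight $W$ is $[x,y]=\langle x,Wy\rangle$. Indefinite matrix product: if $B$ has $p$ columns and $C$ has $p$ rows (or is a vector in $\mathbb{R}^p$), $p\in\{m,n\}$, and $W$ is the weight of $\mathbb{R}^p$, then $B\circ C:=BWC$. $I$ denotes an identity matrix of the appropriate size. Indefinite adjoint of $B\in\mathbb{R}^{p\times q}$: $B^{[*]}:=W_qB^TW_p$, where $W_p,W_q$ are the weights of $\mathbb{R}^p,\mathbb{R}^q$. Indefinite Moore–Penrose inverse: for $A\in\mathbb{R}^{m\times n}$, $A^{[\dagger]}$ is the unique $X\in\mathbb{R}^{n\times m}$ such that - $A\circ X\circ A=A$, - $X\circ A\circ X=X$, - $(A\circ X)^{[*]}=A\circ X$, - $(X\circ A)^{[*]}=X\circ A$. It exists and equals $NA^{\dagger}M$, where $A^\dagger$ is the usual Moore–Penrose inverse. A cone is a nonempty set closed under addition and under multiplication by nonnegative scalars. For $S$ a subset of $\mathbb{R}^p$ with weight $W$, the dual is $S^{[*]}=\{x\in\mathbb{R}^p:[x,t]\ge0\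 \forall t\in S\}$. For a matrix $B$ and a set $S$, $B\circ S=\{B\circ s:s\in S\}$. *)

theory Defs
  imports "HOL-Analysis.Analysis"
begin

text \<open>A weight: real symmetric matrix W with W^2 = I.\<close>
definition weight :: "real^'n^'n \<Rightarrow> bool" where
  "weight W \<longleftrightarrow> transpose W = W \<and> W ** W = mat 1"

text \<open>Indefinite adjoint of B (p x q), Wp weight of R^p, Wq weight of R^q: Wq B^T Wp.\<close>
definition indef_adj :: "real^'p^'p \<Rightarrow> real^'q^'q \<Rightarrow> real^'q^'p \<Rightarrow> real^'p^'q" where
  "indef_adj Wp Wq B = Wq ** transpose B ** Wp"

text \<open>Indefinite Moore-Penrose inverse of A (m x n), M weight of R^m, N weight of R^n.
  Indefinite products: A o X = A N X, X o A = X M A.\<close>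
definition indef_mp :: "real^'m^'m \<Rightarrow> real^'n^'n \<Rightarrow> real^'n^'m \<Rightarrow> real^'m^'n" where
  "indef_mp M N A = (THE X.
      A ** N ** X ** M ** A = A \<and>
      X ** M ** A ** N ** X = X \<and>
      indef_adj M M (A ** N ** X) = A ** N ** X \<and>
      indef_adj N N (X ** M ** A) = X ** M ** A)"

text \<open>Indefinite dual of a set S in a space with weight W.\<close>
definition indef_dual :: "real^'n^'n \<Rightarrow> (real^'n) set \<Rightarrow> (real^'n) set" where
  "indef_dual W S = {x. \<forall>t\<in>S. inner x (W *v t) \<ge> 0}"

definition is_cone :: "(real^'n) set \<Rightarrow> bool" where
  "is_cone K \<longleftrightarrow> K \<noteq> {} \<and> (\<forall>x\<in>K. \<forall>y\<in>K. x + y \<in> K) \<and> (\<forall>c::real. c \<ge> 0 \<longrightarrow> (\<forall>x\<in>K. c *\<^sub>R x \<in> K))"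

end

theory Submission
  imports Defs
begin

lemma proj_sym:
  fixes q :: "'a::real_inner \<Rightarrow> 'a"
  assumes qS: "\<And>y. q y \<in> S" and orth: "\<And>y w. w \<in> S \<Longrightarrow> inner (y - q y) w = 0"
  shows "inner (q y) z = inner y (q z)"
proof -
  have "inner (q y) z = inner (q y) (q z) + inner (z - q z) (q y)"
    by (simp add: inner_diff_left inner_diff_right inner_commute)
  also have "\<dots> = inner (q y) (q z)" using orth[OF qS] by simp
  also have "\<dots> = inner y (q z)" using orth[OF qS, of y z]
    by (simp add: inner_diff_left)
  finally show ?thesis .
qed

lemma sym_matrix:
  fixes B :: "real^'n^'n"
  assumes "\<And>x y. inner (B *v x) y = inner x (B *v y)"
  shows "transpose B = B"
proof -
  have "transpose B *v x = B *v x" for x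
  proof -
    define d where "d = transpose B *v x - B *v x"
    have "inner (transpose B *v x) d = inner (B *v x) d"
      by (simp add: transpose_matrix_vector dot_lmul_matrix assms)
    then have "inner d d = 0" by (simp add: d_def inner_diff_left)
    then show ?thesis by (simp add: d_def)
  qed
  then show ?thesis by (simp add: matrix_eq)
qed

lemma orth_kernel:
  fixes A :: "real^'n^'m"
  assumes "\<And>w. w \<in> range (\<lambda>z. transpose A *v z) \<Longrightarrow> inner k w = 0"
  shows "A *v k = 0"
proof -
  have "inner (A *v k) (A *v k) = inner k (transpose A *v (A *v k))"
    by (metis dot_lmul_matrix inner_commute transpose_matrix_vector transpose_transpose)
  also have "\<dots> = 0" using assms by auto
  finally show ?thesis by simp
qed

lemma inj_row:
  fixes A :: "real^'n^'m"
  shows "inj_on (\<lambda>x. A *v x) (range (\<lambda>z. transpose A *v z))"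
proof (rule linear_inj_on_iff_eq_0[THEN iffD2])
  show "linear ((*v) A)" by simp
  show "subspace (range ((*v) (transpose A)))"
    by (intro linear_subspace_image subspace_UNIV matrix_vector_mul_linear)
  show "\<forall>x\<in>range ((*v) (transpose A)). A *v x = 0 \<longrightarrow> x = 0"
  proof (intro ballI impI)
    fix x assume "x \<in> range ((*v) (transpose A))" "A *v x = 0"
    then obtain z where z: "x = transpose A *v z" by auto
    have "inner x x = inner z (A *v x)"
      by (simp add: z transpose_matrix_vector dot_lmul_matrix)
    then show "x = 0" using \<open>A *v x = 0\<close> by simp
  qed
qed


lemma mp_exists:
  fixes A :: "real^'n^'m"
  shows "\<exists>X. A ** X ** A = A \<and> X ** A ** X = X \<and> transpose (A ** X) = A ** X \<and> transpose (X ** A) = X ** A"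
proof -
  define R where "R = range (\<lambda>z. transpose A *v z)"
  define C where "C = range (\<lambda>z. A *v z)"
  have subR: "subspace R" unfolding R_def
    by (intro linear_subspace_image subspace_UNIV matrix_vector_mul_linear)
  have subC: "subspace C" unfolding C_def
    by (intro linear_subspace_image subspace_UNIV matrix_vector_mul_linear)
  have spR: "span R = R" using subR by (simp add: span_eq_iff)
  have spC: "span C = C" using subC by (simp add: span_eq_iff)
  obtain g where g: "range g \<subseteq> R" "Vector_Spaces.linear (*s) (*s) g" "\<forall>x\<in>R. g (A *v x) = x"
  proof -
    have "inj_on ((*v) A) R" using inj_row[of A] unfolding R_def .
    then have "inj_on ((*v) A) (vec.span R)" by (simp only: span_vec_eq spR)
    from vec.linear_inj_on_left_inverse[OF matrix_vector_mul_linear_gen this]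
    show ?thesis using that by (simp only: span_vec_eq spR) blast
  qed
  have injC: "inj_on (\<lambda>x. transpose A *v x) C"
    using inj_row[of "transpose A"] by (simp add: C_def)
  obtain h where h: "range h \<subseteq> C" "Vector_Spaces.linear (*s) (*s) h" "\<forall>x\<in>C. h (transpose A *v x) = x"
  proof -
    have "inj_on ((*v) (transpose A)) (vec.span C)" using injC by (simp only: span_vec_eq spC)
    from vec.linear_inj_on_left_inverse[OF matrix_vector_mul_linear_gen this]
    show ?thesis using that by (simp only: span_vec_eq spC) blast
  qed
  define qR where "qR x = g (A *v x)" for x
  define qC where "qC y = h (transpose A *v y)" for y
  have qR1: "qR x \<in> R" for x using g(1) by (auto simp: qR_def)
  have qC1: "qC y \<in> C" for y using h(1) by (auto simp: qC_def)
  have qR2: "inner (x - qR x) w = 0" if "w \<in> R" for x w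
  proof -
    obtain r z where rz: "r \<in> span R" "\<And>w. w \<in> span R \<Longrightarrow> orthogonal z w" "x = r + z"
      using orthogonal_subspace_decomp_exists[of R x] by blast
    have "\<And>w. w \<in> R \<Longrightarrow> inner z w = 0" using rz(2) spR by (simp add: orthogonal_def)
    then have "A *v z = 0" unfolding R_def by (rule orth_kernel)
    then have "A *v x = A *v r" by (simp add: rz(3) matrix_vector_right_distrib)
    then have "qR x = r" using g(3) rz(1) spR by (simp add: qR_def)
    then show ?thesis using rz that spR by (simp add: orthogonal_def)
  qed
  have qC2: "inner (y - qC y) w = 0" if "w \<in> C" for y w
  proof -
    obtain r z where rz: "r \<in> span C" "\<And>w. w \<in> span C \<Longrightarrow> orthogonal z w" "y = r + z"
      using orthogonal_subspace_decomp_exists[of C y] by blast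
    have "\<And>w. w \<in> C \<Longrightarrow> inner z w = 0" using rz(2) spC by (simp add: orthogonal_def)
    then have "transpose A *v z = 0" unfolding C_def by (intro orth_kernel) simp
    then have "transpose A *v y = transpose A *v r" by (simp add: rz(3) matrix_vector_right_distrib)
    then have "qC y = r" using h(3) rz(1) spC by (simp add: qC_def)
    then show ?thesis using rz that spC by (simp add: orthogonal_def)
  qed
  have AqR: "A *v qR x = A *v x" for x
  proof -
    have "A *v (x - qR x) = 0" using qR2 by (intro orth_kernel) (auto simp: R_def)
    then show ?thesis by (simp add: matrix_vector_mult_diff_distrib)
  qed
  have qCA: "qC (A *v x) = A *v x" for x using h(3) by (auto simp: qC_def C_def)
  have qCC: "qC (qC y) = qC y" for y using h(3) qC1[of y] by (simp add: qC_def)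
  define f where "f y = g (qC y)" for y
  have lf: "Vector_Spaces.linear (*s) (*s) f"
  proof -
    have "linear (g \<circ> h \<circ> (\<lambda>y. transpose A *v y))"
      using g(2) h(2) unfolding linear_matrix_vector_mul_eq
      by (intro linear_compose matrix_vector_mul_linear)
    moreover have "(g \<circ> h \<circ> (\<lambda>y. transpose A *v y)) = f" by (auto simp: f_def qC_def)
    ultimately show ?thesis by (simp add: linear_matrix_vector_mul_eq)
  qed
  define X where "X = matrix f"
  have Xv: "X *v y = g (qC y)" for y using matrix_works[OF lf] by (simp add: X_def f_def)
  have AXv: "A *v (X *v y) = qC y" for y
  proof -
    obtain z where "qC y = A *v z" using qC1[of y] by (auto simp: C_def)
    then show ?thesis using AqR[of z] by (simp add: Xv qR_def)
  qed
  have XAv: "X *v (A *v x) = qR x" for x by (simp add: Xv qCA qR_def)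
  have e1: "A ** X ** A = A"
    by (simp add: matrix_eq XAv AqR flip: matrix_vector_mul_assoc)
  have e2: "X ** A ** X = X"
  proof -
    have "X *v (A *v (X *v y)) = X *v y" for y by (simp only: AXv) (simp add: Xv qCC)
    then show ?thesis by (simp add: matrix_eq flip: matrix_vector_mul_assoc)
  qed
  have e3: "transpose (A ** X) = A ** X"
    by (rule sym_matrix) (simp add: AXv proj_sym[OF qC1 qC2] flip: matrix_vector_mul_assoc)
  have e4: "transpose (X ** A) = X ** A"
    by (rule sym_matrix) (simp add: XAv proj_sym[OF qR1 qR2] flip: matrix_vector_mul_assoc)
  show ?thesis using e1 e2 e3 e4 by blast
qed

definition mpi :: "real^'n^'m \<Rightarrow> real^'m^'n \<Rightarrow> bool" where
  "mpi A X \<longleftrightarrow> A ** X ** A = A \<and> X ** A ** X = X \<and> transpose (A ** X) = A ** X \<and> transpose (X ** A) = X ** A"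

lemma mpi_unique:
  assumes "mpi A X" "mpi A Y" shows "X = Y"
proof -
  have x1: "A ** X ** A = A" and x2: "X ** A ** X = X" and x3: "transpose (A ** X) = A ** X"
    and x4: "transpose (X ** A) = X ** A" using assms(1) by (auto simp: mpi_def)
  have y1: "A ** Y ** A = A" and y2: "Y ** A ** Y = Y" and y3: "transpose (A ** Y) = A ** Y"
    and y4: "transpose (Y ** A) = Y ** A" using assms(2) by (auto simp: mpi_def)
  have tA1: "transpose A = transpose A ** (A ** Y)"
    by (metis y1 y3 matrix_transpose_mul)
  have tA2: "transpose A = (X ** A) ** transpose A"
    by (metis x1 x4 matrix_transpose_mul matrix_mul_assoc)
  have "X = X ** (A ** X)" using x2 by (simp add: matrix_mul_assoc)
  also have "\<dots> = X ** transpose X ** transpose A" by (metis x3 matrix_transpose_mul matrix_mul_assoc)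
  also have "\<dots> = X ** transpose X ** transpose A ** (A ** Y)"
    using tA1 by (metis matrix_mul_assoc)
  also have "\<dots> = X ** transpose (A ** X) ** A ** Y"
    by (simp add: matrix_transpose_mul matrix_mul_assoc)
  also have "\<dots> = X ** A ** X ** A ** Y" by (simp add: x3 matrix_mul_assoc)
  also have "\<dots> = X ** A ** Y" using x2 by simp
  finally have eX: "X = X ** A ** Y" .
  have "Y = (Y ** A) ** Y" using y2 by simp
  also have "\<dots> = transpose A ** transpose Y ** Y" by (metis y4 matrix_transpose_mul)
  also have "\<dots> = (X ** A) ** transpose A ** transpose Y ** Y"
    using tA2 by (metis matrix_mul_assoc)
  also have "\<dots> = X ** A ** transpose (Y ** A) ** Y"
    by (simp add: matrix_transpose_mul matrix_mul_assoc)
  also have "\<dots> = X ** A ** (Y ** A ** Y)" by (simp add: y4 matrix_mul_assoc)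
  also have "\<dots> = X ** A ** Y" using y2 by simp
  finally show ?thesis using eX by simp
qed


lemma mpi_exists: "\<exists>X. mpi A X"
  using mp_exists[of A] by (auto simp: mpi_def)

lemma cancel_left:
  assumes "M ** M = mat 1" "M ** U = M ** V" shows "U = V"
  by (metis assms matrix_mul_assoc matrix_mul_lid)

lemma cancel_right:
  assumes "M ** M = mat 1" "U ** M = V ** M" shows "U = V"
  by (metis assms matrix_mul_assoc matrix_mul_rid)

lemma indef_iff:
  fixes M :: "real^'m^'m" and N :: "real^'n^'n" and A :: "real^'n^'m" and X :: "real^'m^'n"
  assumes wM: "weight M" and wN: "weight N" and com: "M ** A = A ** N"
  shows "(A ** N ** X ** M ** A = A \<and>
      X ** M ** A ** N ** X = X \<and>
      indef_adj M M (A ** N ** X) = A ** N ** X \<and>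
      indef_adj N N (X ** M ** A) = X ** M ** A) \<longleftrightarrow> mpi A X"
proof -
  have tM: "transpose M = M" and MM: "M ** M = mat 1" using wM by (auto simp: weight_def)
  have tN: "transpose N = N" and NN: "N ** N = mat 1" using wN by (auto simp: weight_def)
  have MAN: "M ** A ** N = A" by (metis com NN matrix_mul_assoc matrix_mul_rid)
  have i1: "A ** N ** X ** M ** A = M ** (A ** X ** A) ** N"
    by (metis com matrix_mul_assoc)
  have i2: "X ** M ** A ** N ** X = X ** A ** X" by (metis MAN matrix_mul_assoc)
  have ANX: "A ** N ** X = M ** (A ** X)" by (metis com matrix_mul_assoc)
  have i3: "indef_adj M M (A ** N ** X) = M ** transpose (A ** X)"
    unfolding indef_adj_def ANX
    by (metis MM tM matrix_transpose_mul matrix_mul_assoc matrix_mul_rid)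
  have XMA: "X ** M ** A = (X ** A) ** N" by (metis com matrix_mul_assoc)
  have i4: "indef_adj N N (X ** M ** A) = transpose (X ** A) ** N"
    unfolding indef_adj_def XMA
    by (metis NN tN matrix_transpose_mul matrix_mul_assoc matrix_mul_lid)
  have e1: "A ** N ** X ** M ** A = A \<longleftrightarrow> A ** X ** A = A"
  proof
    assume "A ** N ** X ** M ** A = A"
    then have "M ** (A ** X ** A) ** N = M ** A ** N" using i1 MAN by simp
    then show "A ** X ** A = A"
      using cancel_left[OF MM] cancel_right[OF NN] by (metis matrix_mul_assoc)
  next
    assume "A ** X ** A = A" then show "A ** N ** X ** M ** A = A" using i1 MAN by simp
  qed
  have e3: "indef_adj M M (A ** N ** X) = A ** N ** X \<longleftrightarrow> transpose (A ** X) = A ** X"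
    unfolding i3 unfolding ANX using cancel_left[OF MM, of "transpose (A ** X)" "A ** X"] by auto
  have e4: "indef_adj N N (X ** M ** A) = X ** M ** A \<longleftrightarrow> transpose (X ** A) = X ** A"
    unfolding i4 unfolding XMA using cancel_right[OF NN, of "transpose (X ** A)" "X ** A"] by auto
  show ?thesis unfolding mpi_def using e1 i2 e3 e4 by auto
qed

lemma indef_mp_mpi:
  fixes M :: "real^'m^'m" and N :: "real^'n^'n" and A :: "real^'n^'m"
  assumes wM: "weight M" and wN: "weight N" and com: "M ** A = A ** N"
  shows "mpi A (indef_mp M N A)"
proof -
  obtain Y where Y: "mpi A Y" using mpi_exists by blast
  have "mpi A (THE X. mpi A X)"
    by (rule theI[of "mpi A" Y]) (use Y mpi_unique in auto)
  then show ?thesis unfolding indef_mp_def indef_iff[OF assms] .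
qed

lemma mpi_conj:
  fixes M :: "real^'m^'m" and N :: "real^'n^'n" and A :: "real^'n^'m"
  assumes wM: "weight M" and wN: "weight N" and com: "M ** A = A ** N" and X: "mpi A X"
  shows "mpi A (N ** X ** M)"
proof -
  have tM: "transpose M = M" and MM: "M ** M = mat 1" using wM by (auto simp: weight_def)
  have tN: "transpose N = N" and NN: "N ** N = mat 1" using wN by (auto simp: weight_def)
  have MAN: "M ** A ** N = A" by (metis com NN matrix_mul_assoc matrix_mul_rid)
  have x1: "A ** X ** A = A" and x2: "X ** A ** X = X" and x3: "transpose (A ** X) = A ** X"
    and x4: "transpose (X ** A) = X ** A" using X by (auto simp: mpi_def)
  have c1: "A ** (N ** X ** M) ** A = A"
  proof -
    have "A ** (N ** X ** M) ** A = M ** (A ** X ** A) ** N" by (metis com matrix_mul_assoc)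
    then show ?thesis using x1 MAN by simp
  qed
  have c2: "(N ** X ** M) ** A ** (N ** X ** M) = N ** X ** M"
  proof -
    have "(N ** X ** M) ** A ** (N ** X ** M) = N ** (X ** (M ** A ** N) ** X) ** M"
      by (metis matrix_mul_assoc)
    then show ?thesis using x2 MAN by simp
  qed
  have c3: "transpose (A ** (N ** X ** M)) = A ** (N ** X ** M)"
  proof -
    have a: "A ** (N ** X ** M) = M ** (A ** X) ** M" by (metis com matrix_mul_assoc)
    have "transpose (M ** (A ** X) ** M) = transpose M ** transpose (A ** X) ** transpose M"
      by (simp only: matrix_transpose_mul matrix_mul_assoc)
    then show ?thesis unfolding a by (simp only: tM x3)
  qed
  have c4: "transpose ((N ** X ** M) ** A) = (N ** X ** M) ** A"
  proof -
    have a: "(N ** X ** M) ** A = N ** (X ** A) ** N" by (metis com matrix_mul_assoc)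
    have "transpose (N ** (X ** A) ** N) = transpose N ** transpose (X ** A) ** transpose N"
      by (simp only: matrix_transpose_mul matrix_mul_assoc)
    then show ?thesis unfolding a by (simp only: tN x4)
  qed
  show ?thesis unfolding mpi_def using c1 c2 c3 c4 by simp
qed

theorem lemma3p3:
  fixes M :: "real^'m^'m" and N :: "real^'n^'n" and A :: "real^'n^'m"
    and K :: "(real^'n) set"
  assumes "weight M" and "weight N" and "M ** A = A ** N"
    and "is_cone K" and "closed K"
  shows "(\<lambda>k. indef_mp M N A ** M ** A ** N *v k) ` K \<subseteq> K \<longleftrightarrow>
         (\<lambda>k. indef_mp M N A ** M ** A ** N *v k) ` indef_dual N K \<subseteq> indef_dual N K"
proof -
  define X where "X = indef_mp M N A"
  have tN: "transpose N = N" and NN: "N ** N = mat 1" using assms(2) by (auto simp: weight_def)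
  have NN': "N ** N ** Z = Z" for Z :: "real^'n^'n" using NN by simp
  have MM: "M ** M = mat 1" using assms(1) by (auto simp: weight_def)
  have MAN: "M ** A ** N = A" by (metis assms(3) NN matrix_mul_assoc matrix_mul_rid)
  have X: "mpi A X" unfolding X_def by (rule indef_mp_mpi[OF assms(1-3)])
  have X': "mpi A (N ** X ** M)" by (rule mpi_conj[OF assms(1-3) X])
  have XNXM: "N ** X ** M = X" using mpi_unique[OF X' X] .
  define Pm where "Pm = X ** A"
  have PmE: "X ** M ** A ** N = Pm" unfolding Pm_def by (metis MAN matrix_mul_assoc)
  have tP: "transpose Pm = Pm" using X by (simp add: mpi_def Pm_def)
  have NP: "N ** Pm = Pm ** N"
  proof -
    have "N ** Pm = N ** (N ** X ** M) ** A" unfolding Pm_def by (metis XNXM matrix_mul_assoc)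
    also have "\<dots> = X ** M ** A" by (metis NN' matrix_mul_assoc)
    also have "\<dots> = Pm ** N" by (metis assms(3) matrix_mul_assoc Pm_def)
    finally show ?thesis .
  qed
  define p where "p k = Pm *v k" for k
  have psym: "inner (p x) y = inner x (p y)" for x y
    by (metis p_def tP dot_lmul_matrix transpose_matrix_vector)
  have pN: "N *v p x = p (N *v x)" for x
    by (simp add: p_def matrix_vector_mul_assoc NP)
  have NNv: "N *v (N *v x) = x" for x by (simp add: matrix_vector_mul_assoc NN)
  have Ninner: "inner (N *v x) (N *v y) = inner x y" for x y
    by (metis NNv tN dot_lmul_matrix transpose_matrix_vector)
  have fun_eq: "(\<lambda>k. indef_mp M N A ** M ** A ** N *v k) = p"
    by (simp add: fun_eq_iff p_def PmE flip: X_def)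
  have cone: "K \<noteq> {}" "\<And>x y. x \<in> K \<Longrightarrow> y \<in> K \<Longrightarrow> x + y \<in> K"
    "\<And>c x. c \<ge> 0 \<Longrightarrow> x \<in> K \<Longrightarrow> c *\<^sub>R x \<in> K"
    using assms(4) by (auto simp: is_cone_def)
  have zK: "0 \<in> K" using cone(1) cone(3)[of 0] by fastforce
  have convK: "convex K" unfolding convex_def using cone(2,3) by blast
  show ?thesis unfolding fun_eq
  proof
    assume h: "p ` K \<subseteq> K"
    show "p ` indef_dual N K \<subseteq> indef_dual N K"
    proof (clarsimp simp: indef_dual_def)
      fix x t assume x: "\<forall>t\<in>K. 0 \<le> inner x (N *v t)" and t: "t \<in> K"
      have "inner (p x) (N *v t) = inner x (N *v p t)" by (simp add: psym pN)
      also have "\<dots> \<ge> 0" using x h t by auto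
      finally show "0 \<le> inner (p x) (N *v t)" .
    qed
  next
    assume h: "p ` indef_dual N K \<subseteq> indef_dual N K"
    show "p ` K \<subseteq> K"
    proof (rule ccontr)
      assume "\<not> p ` K \<subseteq> K"
      then obtain k where k: "k \<in> K" "p k \<notin> K" by auto
      obtain a b where ab: "inner a (p k) < b" "\<forall>x\<in>K. inner a x > b"
        using separating_hyperplane_closed_point[OF convK assms(5) k(2)] by blast
      have b0: "b < 0" using ab(2) zK by force
      have apos: "inner a x \<ge> 0" if "x \<in> K" for x
      proof (rule ccontr)
        assume "\<not> 0 \<le> inner a x"
        then have neg: "inner a x < 0" by simp
        define c where "c = 2 * b / inner a x"
        have "c \<ge> 0" using neg b0 by (simp add: c_def divide_nonpos_neg)
        then have "c *\<^sub>R x \<in> K" using cone(3) that by blast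
        moreover have "inner a (c *\<^sub>R x) = 2 * b" using neg by (simp add: c_def)
        ultimately show False using ab(2) b0 by force
      qed
      have d: "N *v a \<in> indef_dual N K"
        unfolding indef_dual_def using apos by (simp add: Ninner)
      then have "p (N *v a) \<in> indef_dual N K" using h by blast
      then have "0 \<le> inner (p (N *v a)) (N *v k)" using k(1) by (auto simp: indef_dual_def)
      also have "inner (p (N *v a)) (N *v k) = inner a (p k)"
        by (metis pN Ninner psym)
      finally show False using ab(1) b0 by simp
    qed
  qed
qed

end
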